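(* Let $X$ be a real Hilbert space, $f:X\to\mathbb{R}\cup\{+\infty\}$ a proper $\Phi_{lsc}$-convex function and $\bar x\in\mathrm{dom}(f)$. If $f$ is prox-regular at $\bar x$ for $\bar v\in\partial f(\bar x)$, then there exists $\bar a\ge0$ such that $(\bar a,\ \bar v+2\bar a\bar x)\in\partial_{lsc}f(\bar x)$; in particular $\partial_{lsc}f(\bar x)\ne\emptyset$.
   Context: $\Phi_{lsc}$ is the class of functions $\varphi(x)=-a\|x\|^2+\langle v,x\rangle+c$ ($a\ge0$, $v\in X^*$, $c\in\mathbb{R}$); $f$ is $\Phi_{lsc}$-convex if it is the pointwise supremum of the $\varphi\in\Phi_{lsc}$ with $\varphi\le f$; proper means at least one such $\varphi$ exists and $\mathrm{dom}(f)\ne\emptyset$. $\partial_{lsc}f(\bar x)$ is the set of $(a,v)\in\mathbb{R}_+\times X^*$ with $f(x)-f(\bar x)\ge\langle v,x-\bar x\rangle-a\|x\|^2+a\|\bar x\|^2$ for all $x\in X$. $\partial f(\bar x)$ denotes the limiting (Mordukhovich) subdifferential. $f$ is prox-regular at $\bar x$ for $\bar v\in\partial f(\bar x)$ if there exist $\rho>0$, $\varepsilon>0$ such that for all $x,x'$ with $\|x-\bar x\|<\varepsilon$, $\|x'-\bar x\|<\varepsilon$, $|f(x)-f(\bar x)|<\varepsilon$, and all $v\in\partial f(x)$ with $\|v-\bar v\|<\varepsilon$, one has $f(x')\ge f(x)+\langle v,x'-x\rangle-\tfrac12\rho\|x'-x\|^2$. *)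

theory Defs
  imports "HOL-Analysis.Analysis"
begin

text \<open>The dual X* is identified with X via the Riesz representation (inner product).\<close>

definition phi_lsc :: "real \<Rightarrow> 'a::real_inner \<Rightarrow> real \<Rightarrow> 'a \<Rightarrow> real" where
  "phi_lsc a v c x = - a * (norm x)^2 + inner v x + c"

definition Phi_lsc :: "('a::real_inner \<Rightarrow> real) set" where
  "Phi_lsc = {phi_lsc a v c | a v c. a \<ge> 0}"

definition minorants_lsc :: "('a::real_inner \<Rightarrow> ereal) \<Rightarrow> ('a \<Rightarrow> real) set" where
  "minorants_lsc f = {\<phi> \<in> Phi_lsc. \<forall>x. ereal (\<phi> x) \<le> f x}"

definition Phi_lsc_convex :: "('a::real_inner \<Rightarrow> ereal) \<Rightarrow> bool" where
  "Phi_lsc_convex f \<longleftrightarrow> (\<forall>x. f x = (SUP \<phi>\<in>minorants_lsc f. ereal (\<phi> x)))"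

definition edom :: "('a \<Rightarrow> ereal) \<Rightarrow> 'a set" where
  "edom f = {x. f x < \<infinity>}"

definition Phi_lsc_proper :: "('a::real_inner \<Rightarrow> ereal) \<Rightarrow> bool" where
  "Phi_lsc_proper f \<longleftrightarrow> minorants_lsc f \<noteq> {} \<and> edom f \<noteq> {}"

definition lsc_subdiff :: "('a::real_inner \<Rightarrow> ereal) \<Rightarrow> 'a \<Rightarrow> (real \<times> 'a) set" where
  "lsc_subdiff f xb = {(a, v). a \<ge> 0 \<and>
     (\<forall>x. f x \<ge> f xb + ereal (inner v (x - xb) - a * (norm x)^2 + a * (norm xb)^2))}"

definition frechet_subdiff :: "('a::real_inner \<Rightarrow> ereal) \<Rightarrow> 'a \<Rightarrow> 'a set" where
  "frechet_subdiff f x = {v. \<bar>f x\<bar> \<noteq> \<infinity> \<and>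
     (\<forall>e>0. \<exists>d>0. \<forall>y. norm (y - x) < d \<longrightarrow>
        f y \<ge> f x + ereal (inner v (y - x) - e * norm (y - x)))}"

definition weak_conv :: "(nat \<Rightarrow> 'a::real_inner) \<Rightarrow> 'a \<Rightarrow> bool" where
  "weak_conv u v \<longleftrightarrow> (\<forall>y. (\<lambda>k. inner (u k) y) \<longlonglongrightarrow> inner v y)"

definition limiting_subdiff :: "('a::real_inner \<Rightarrow> ereal) \<Rightarrow> 'a \<Rightarrow> 'a set" where
  "limiting_subdiff f x = {v. \<bar>f x\<bar> \<noteq> \<infinity> \<and>
     (\<exists>xs vs. xs \<longlonglongrightarrow> x \<and> (\<lambda>k. f (xs k)) \<longlonglongrightarrow> f x \<and>
        (\<forall>k. vs k \<in> frechet_subdiff f (xs k)) \<and> weak_conv vs v)}"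

definition prox_regular :: "('a::real_inner \<Rightarrow> ereal) \<Rightarrow> 'a \<Rightarrow> 'a \<Rightarrow> bool" where
  "prox_regular f xb vb \<longleftrightarrow> vb \<in> limiting_subdiff f xb \<and>
     (\<exists>\<rho>>0. \<exists>\<epsilon>>0. \<forall>x x' v.
        norm (x - xb) < \<epsilon> \<longrightarrow> norm (x' - xb) < \<epsilon> \<longrightarrow> \<bar>f x - f xb\<bar> < ereal \<epsilon> \<longrightarrow>
        v \<in> limiting_subdiff f x \<longrightarrow> norm (v - vb) < \<epsilon> \<longrightarrow>
        f x' \<ge> f x + ereal (inner v (x' - x) - \<rho> / 2 * (norm (x' - x))^2))"

end

theory Submission
  imports Defs
begin

lemma quad_aux:
  fixes B n K t e :: real
  assumes "e > 0" "t \<ge> e" "n \<ge> 0" "B \<ge> (n * e + \<bar>K\<bar>) / e^2"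
  shows "B * t^2 - n * t + K \<ge> 0"
proof -
  have B0: "B \<ge> 0" using assms by (smt (verit) divide_nonneg_pos zero_less_power abs_ge_zero mult_nonneg_nonneg)
  have "B * e^2 \<ge> n * e + \<bar>K\<bar>" using assms by (simp add: pos_divide_le_eq)
  have t0: "t > 0" using assms by simp
  have "B * t^2 = B * t * t" by (simp add: power2_eq_square)
  have "B * t^2 \<ge> B * e^2 * (t / e)^2"
    using assms by (simp add: power_divide field_simps)
  have r: "(t/e)^2 \<ge> t/e" "t/e \<ge> 1" using assms
    by (auto simp: power2_eq_square field_simps)
  have "B * e^2 * (t / e)^2 \<ge> (n * e + \<bar>K\<bar>) * (t / e)^2"
    using \<open>B * e^2 \<ge> n * e + \<bar>K\<bar>\<close> by (simp add: mult_right_mono)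
  moreover have "(n * e + \<bar>K\<bar>) * (t / e)^2 \<ge> n * e * (t/e) + \<bar>K\<bar>"
  proof -
    have "n * e * (t/e)^2 \<ge> n * e * (t/e)" using r(1) assms by (intro mult_left_mono) auto
    moreover have "\<bar>K\<bar> * (t/e)^2 \<ge> \<bar>K\<bar>" using r
      by (metis abs_ge_zero mult_left_mono mult.right_neutral order_trans)
    ultimately show ?thesis by (simp add: distrib_right)
  qed
  moreover have "n * e * (t/e) = n * t" using assms by simp
  ultimately show ?thesis using \<open>B * t^2 \<ge> B * e^2 * (t / e)^2\<close> by linarith
qed

theorem mainTheorem9:
  fixes f :: "'a::{real_inner, complete_space} \<Rightarrow> ereal"
    and xb vb :: 'a
  assumes "\<forall>x. f x \<noteq> -\<infinity>"
    and "Phi_lsc_proper f"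
    and "Phi_lsc_convex f"
    and "xb \<in> edom f"
    and "vb \<in> limiting_subdiff f xb"
    and "prox_regular f xb vb"
  shows "\<exists>ab\<ge>0. (ab, vb + (2 * ab) *\<^sub>R xb) \<in> lsc_subdiff f xb \<and> lsc_subdiff f xb \<noteq> {}"
proof -
  obtain r where r: "f xb = ereal r"
    using assms(1,4) unfolding edom_def by (cases "f xb") auto
  obtain \<rho> \<epsilon> where rho: "\<rho> > 0" and eps: "\<epsilon> > 0" and PR: "\<forall>x x' v.
        norm (x - xb) < \<epsilon> \<longrightarrow> norm (x' - xb) < \<epsilon> \<longrightarrow> \<bar>f x - f xb\<bar> < ereal \<epsilon> \<longrightarrow>
        v \<in> limiting_subdiff f x \<longrightarrow> norm (v - vb) < \<epsilon> \<longrightarrow>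
        f x' \<ge> f x + ereal (inner v (x' - x) - \<rho> / 2 * (norm (x' - x))^2)"
    using assms(6) unfolding prox_regular_def by blast
  have loc: "f x \<ge> ereal r + ereal (inner vb (x - xb) - \<rho> / 2 * (norm (x - xb))^2)"
    if "norm (x - xb) < \<epsilon>" for x
    using PR[rule_format, of xb x vb] that eps assms(5) r by simp
  obtain \<phi> where "\<phi> \<in> minorants_lsc f" using assms(2) unfolding Phi_lsc_proper_def by blast
  then obtain a0 w c where a0: "a0 \<ge> 0" and mino: "\<And>x. ereal (phi_lsc a0 w c x) \<le> f x"
    unfolding minorants_lsc_def Phi_lsc_def by blast
  define u where "u = w - (2 * a0) *\<^sub>R xb - vb"
  define K where "K = - a0 * (norm xb)^2 + inner w xb + c - r"
  define a where "a = max (\<rho>/2) (a0 + (norm u * \<epsilon> + \<bar>K\<bar>) / \<epsilon>^2)"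
  have a_ge: "a \<ge> \<rho>/2" "a - a0 \<ge> (norm u * \<epsilon> + \<bar>K\<bar>) / \<epsilon>^2" unfolding a_def by auto
  have a_nn: "a \<ge> 0" using a_ge rho by linarith
  have main: "f x \<ge> ereal r + ereal (inner vb (x - xb) - a * (norm (x - xb))^2)" for x
  proof (cases "norm (x - xb) < \<epsilon>")
    case True
    have "ereal r + ereal (inner vb (x - xb) - a * (norm (x - xb))^2)
        \<le> ereal r + ereal (inner vb (x - xb) - \<rho> / 2 * (norm (x - xb))^2)"
      using a_ge(1) mult_right_mono[of "\<rho>" "a*2" "(norm (x - xb))^2"] by simp
    then show ?thesis using loc[OF True] by order
  next
    case False
    define h where "h = x - xb"
    have xh: "x = xb + h" unfolding h_def by simp
    have eq: "phi_lsc a0 w c x = - a0 * (norm h)^2 + inner (w - (2 * a0) *\<^sub>R xb) h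
         + (- a0 * (norm xb)^2 + inner w xb + c)"
      unfolding phi_lsc_def xh power2_norm_eq_inner
      by (simp add: inner_add_left inner_add_right inner_diff_left algebra_simps inner_commute)
    have q: "(a - a0) * (norm h)^2 - norm u * norm h + K \<ge> 0"
      using quad_aux[OF eps _ _ a_ge(2)] False unfolding h_def by (simp add: not_less)
    have cs: "inner u h \<ge> - (norm u * norm h)"
      using Cauchy_Schwarz_ineq2[of u h] by linarith
    have "r + (inner vb h - a * (norm h)^2) \<le> phi_lsc a0 w c x"
      unfolding eq using q cs unfolding u_def K_def
      by (simp add: inner_diff_left algebra_simps)
    then have "ereal r + ereal (inner vb h - a * (norm h)^2) \<le> f x"
      using mino[of x] by (metis plus_ereal.simps(1) ereal_less_eq(3) order_trans)
    then show ?thesis unfolding h_def .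
  qed
  have mem: "(a, vb + (2 * a) *\<^sub>R xb) \<in> lsc_subdiff f xb"
    unfolding lsc_subdiff_def
  proof (simp add: a_nn, intro allI)
    fix x
    have "inner (vb + (2 * a) *\<^sub>R xb) (x - xb) - a * (norm x)^2 + a * (norm xb)^2
        = inner vb (x - xb) - a * (norm (x - xb))^2"
      unfolding power2_norm_eq_inner
      by (simp add: inner_add_left inner_diff_left inner_diff_right algebra_simps inner_commute)
    then show "f xb + ereal (inner (vb + (2 * a) *\<^sub>R xb) (x - xb) - a * (norm x)^2 + a * (norm xb)^2) \<le> f x"
      using main[of x] r by simp
  qed
  show ?thesis using mem a_nn by blast
qed

end
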